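(* Let $a\ge1$ be an integer, $b>0$, $c\ge0$, $p\ge1$. There exists a constant $c_3>0$ depending only on $a,b,c,p$ such that for every $n\ge2$, \[ \frac{Z_{n,p}}{Z_{n-1,p}}\ge e^{-c_3 n}. \]
   Context: $\gamma_p=\Gamma(p/2)\Gamma(1/2)/(2\Gamma((p+1)/2))$. For $x\in\mathbb R^m$, $f_{a,b,c}(x)=\prod_{1\le i<j\le m}|x_i^a-x_j^a|^b\prod_{i=1}^m|x_i|^c$ and $Z_{m,p}=\int_{\mathbb R^m}e^{-abm\gamma_p\|x\|_p^p}f_{a,b,c}(x)\,dx$. *)

theory Defs
  imports "HOL-Analysis.Analysis"
begin

text \<open>Real power with the convention t^0 = 1 (Isabelle's powr has 0 powr 0 = 0).\<close>
definition rpow :: "real \<Rightarrow> real \<Rightarrow> real" where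
  "rpow t e = (if e = 0 then 1 else t powr e)"

definition gamma_p :: "real \<Rightarrow> real" where
  "gamma_p p = Gamma (p / 2) * Gamma (1 / 2) / (2 * Gamma ((p + 1) / 2))"

definition f_abc :: "nat \<Rightarrow> real \<Rightarrow> real \<Rightarrow> nat \<Rightarrow> (nat \<Rightarrow> real) \<Rightarrow> real" where
  "f_abc a b c m x =
     (\<Prod>i<m. \<Prod>j\<in>{i<..<m}. rpow \<bar>x i ^ a - x j ^ a\<bar> b) * (\<Prod>i<m. rpow \<bar>x i\<bar> c)"

definition Z :: "nat \<Rightarrow> real \<Rightarrow> real \<Rightarrow> nat \<Rightarrow> real \<Rightarrow> real" where
  "Z a b c m p =
     integral\<^sup>L (PiM {..<m} (\<lambda>_. lborel))
       (\<lambda>x. exp (- real a * b * real m * gamma_p p * (\<Sum>i<m. \<bar>x i\<bar> powr p)) * f_abc a b c m x)"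

end

theory Submission
  imports Defs "HOL-Probability.Sinc_Integral"
begin


lemma rpow_meas[measurable]: "(\<lambda>t. rpow t e) \<in> borel_measurable borel"
  unfolding rpow_def by (cases "e = 0") auto

lemma f_abc_meas[measurable]:
  "f_abc a b c m \<in> borel_measurable (PiM {..<m} (\<lambda>_. lborel))"
  unfolding f_abc_def by measurable

lemma g_meas[measurable]:
  "(\<lambda>x. exp (-\<beta> * (\<Sum>i<m. \<bar>x i\<bar> powr p)) * f_abc a b c m x) \<in> borel_measurable (PiM {..<m} (\<lambda>_. lborel))"
  by measurable



lemma scale_PiM:
  fixes I :: "nat set" and l :: real
  assumes "finite I" "l > 0"
  shows "g \<in> borel_measurable (PiM I (\<lambda>_. lborel)) \<Longrightarrow>
    (\<integral>\<^sup>+x. g x \<partial>PiM I (\<lambda>_. lborel)) = ennreal (l ^ card I) * (\<integral>\<^sup>+x. g (\<lambda>i\<in>I. l * x i) \<partial>PiM I (\<lambda>_. lborel))"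
  using assms(1)
proof (induction I arbitrary: g rule: finite_induct)
  case empty
  then show ?case by (simp add: PiM_empty nn_integral_count_space_finite)
next
  case (insert i I)
  interpret product_sigma_finite "\<lambda>_::nat. lborel :: real measure" by standard
  note gm[measurable] = insert.prems
  define h where "h = (\<lambda>x. \<integral>\<^sup>+y. g (x(i := l * y)) \<partial>(lborel::real measure))"
  have upd[measurable]: "(\<lambda>(x, y). g (x(i := l * y))) \<in> borel_measurable (PiM I (\<lambda>_. lborel) \<Otimes>\<^sub>M lborel)"
  proof -
    have "(\<lambda>(x, y). x(i := l * y)) \<in> PiM I (\<lambda>_. lborel) \<Otimes>\<^sub>M lborel \<rightarrow>\<^sub>M PiM (insert i I) (\<lambda>_. lborel)"
    proof -
      have "(\<lambda>(x, y). (x, l * y)) \<in> PiM I (\<lambda>_. lborel) \<Otimes>\<^sub>M lborel \<rightarrow>\<^sub>M PiM I (\<lambda>_. lborel) \<Otimes>\<^sub>M lborel"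
        by measurable
      from measurable_compose[OF this measurable_add_dim[of i I "\<lambda>_. lborel"]]
      show ?thesis by (simp add: split_beta')
    qed
    from measurable_compose[OF this gm] show ?thesis by (simp add: split_beta')
  qed
  have hm: "h \<in> borel_measurable (PiM I (\<lambda>_. lborel))"
    unfolding h_def by (rule lborel.borel_measurable_nn_integral) (simp add: split_beta' upd)
  have "(\<integral>\<^sup>+x. g x \<partial>PiM (insert i I) (\<lambda>_. lborel)) = (\<integral>\<^sup>+x. (\<integral>\<^sup>+y. g (x(i := y)) \<partial>(lborel::real measure)) \<partial>PiM I (\<lambda>_. lborel))"
    using insert by (intro product_nn_integral_insert) auto
  also have "\<dots> = (\<integral>\<^sup>+x. ennreal l * h x \<partial>PiM I (\<lambda>_. lborel))"
  proof (intro nn_integral_cong)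
    fix x :: "nat \<Rightarrow> real" assume x: "x \<in> space (PiM I (\<lambda>_. lborel))"
    have "(\<lambda>y. g (x(i := y))) \<in> borel_measurable borel"
      using measurable_comp[OF measurable_component_update gm, OF x \<open>i \<notin> I\<close>]
      unfolding comp_def by simp
    then show "(\<integral>\<^sup>+y. g (x(i := y)) \<partial>(lborel::real measure)) = ennreal l * h x"
      unfolding h_def using nn_integral_real_affine[of "\<lambda>y. g (x(i := y))" l 0] \<open>l > 0\<close>
      by simp
  qed
  also have "\<dots> = ennreal l * (\<integral>\<^sup>+x. h x \<partial>PiM I (\<lambda>_. lborel))"
    using hm by (simp add: nn_integral_cmult)
  also have "(\<integral>\<^sup>+x. h x \<partial>PiM I (\<lambda>_. lborel)) = ennreal (l ^ card I) * (\<integral>\<^sup>+x. h (\<lambda>j\<in>I. l * x j) \<partial>PiM I (\<lambda>_. lborel))"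
    using insert.IH[OF hm] .
  also have "(\<integral>\<^sup>+x. h (\<lambda>j\<in>I. l * x j) \<partial>PiM I (\<lambda>_. lborel))
      = (\<integral>\<^sup>+x. (\<integral>\<^sup>+y. g (\<lambda>j\<in>insert i I. l * (x(i := y)) j) \<partial>(lborel::real measure)) \<partial>PiM I (\<lambda>_. lborel))"
    unfolding h_def
    by (intro nn_integral_cong arg_cong[where f=g] ext) (auto simp: restrict_def insert)
  also have "\<dots> = (\<integral>\<^sup>+x. g (\<lambda>j\<in>insert i I. l * x j) \<partial>PiM (insert i I) (\<lambda>_. lborel))"
    using insert by (intro product_nn_integral_insert[symmetric]) auto
  finally have fin: "(\<integral>\<^sup>+x. g x \<partial>PiM (insert i I) (\<lambda>_. lborel)) = ennreal l * (ennreal (l ^ card I) * (\<integral>\<^sup>+x. g (\<lambda>j\<in>insert i I. l * x j) \<partial>PiM (insert i I) (\<lambda>_. lborel)))" .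
  have eq: "ennreal l * ennreal (l ^ card I) = ennreal (l ^ card (insert i I))"
    using insert \<open>l > 0\<close> by (simp add: ennreal_mult[symmetric])
  show ?case using fin eq by (metis mult.assoc)
qed



lemma int_sqrt01: "(\<integral>\<^sup>+s. ennreal (indicator {0..1} s * s powr (-1/2)) \<partial>lborel) = 2"
proof -
  have "((\<lambda>x::real. x powr (-1/2)) has_integral (1 powr (-1/2+1) / (-1/2+1))) {0..1}"
    by (rule has_integral_powr_from_0) auto
  then have "((\<lambda>x::real. x powr (-1/2)) has_integral 2) {0..1}" by simp
  then have "((\<lambda>x::real. indicator {0..1} x * x powr (-1/2)) has_integral 2) UNIV"
  proof -
    have eq: "(\<lambda>x::real. indicator {0..1} x * x powr (-1/2)) = (\<lambda>x. if x \<in> {0..1} then x powr (-1/2) else 0)"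
      by (auto simp: indicator_def)
    show ?thesis using \<open>((\<lambda>x::real. x powr (-1/2)) has_integral 2) {0..1}\<close>
      unfolding eq by (subst has_integral_restrict_UNIV)
  qed
  then show ?thesis
    by (subst nn_integral_has_integral_lborel) (auto simp: indicator_def)
qed

lemma int_sqrt11: "(\<integral>\<^sup>+s. ennreal (indicator {-1..1} s * \<bar>s\<bar> powr (-1/2)) \<partial>lborel) \<le> 4"
proof -
  have "(\<integral>\<^sup>+s. ennreal (indicator {-1..0} s * \<bar>s\<bar> powr (-1/2)) \<partial>lborel)
      = ennreal \<bar>-1\<bar> * (\<integral>\<^sup>+s. ennreal (indicator {-1..0} (0 + -1 * s) * \<bar>0 + -1 * s\<bar> powr (-1/2)) \<partial>lborel)"
    by (rule nn_integral_real_affine) auto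
  also have "\<dots> = (\<integral>\<^sup>+s. ennreal (indicator {0..1} s * s powr (-1/2)) \<partial>lborel)"
    by (auto intro!: nn_integral_cong simp: indicator_def)
  finally have A: "(\<integral>\<^sup>+s. ennreal (indicator {-1..0} s * \<bar>s\<bar> powr (-1/2)) \<partial>lborel) = 2"
    using int_sqrt01 by simp
  have B: "(\<integral>\<^sup>+s. ennreal (indicator {0..1} s * \<bar>s\<bar> powr (-1/2)) \<partial>lborel) = 2"
    using int_sqrt01 by (subst (asm) nn_integral_cong[where v="\<lambda>s. ennreal (indicator {0..1} s * \<bar>s\<bar> powr (-1/2))"])
      (auto simp: indicator_def)
  have "(\<integral>\<^sup>+s. ennreal (indicator {-1..1} s * \<bar>s\<bar> powr (-1/2)) \<partial>lborel)
     \<le> (\<integral>\<^sup>+s. ennreal (indicator {-1..0} s * \<bar>s\<bar> powr (-1/2)) + ennreal (indicator {0..1} s * \<bar>s\<bar> powr (-1/2)) \<partial>lborel)"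
    by (intro nn_integral_mono) (auto simp: indicator_def ennreal_plus[symmetric] simp del: ennreal_plus)
  also have "\<dots> = (\<integral>\<^sup>+s. ennreal (indicator {-1..0} s * \<bar>s\<bar> powr (-1/2)) \<partial>lborel) + (\<integral>\<^sup>+s. ennreal (indicator {0..1} s * \<bar>s\<bar> powr (-1/2)) \<partial>lborel)"
    by (rule nn_integral_add) auto
  also have "\<dots> = 4" unfolding A B by simp
  finally show ?thesis .
qed

lemma int_sqrt_shift: "(\<integral>\<^sup>+t. ennreal (indicator {1..2} t * \<bar>t - u\<bar> powr (-1/2)) \<partial>lborel) \<le> 5"
proof -
  have "(\<integral>\<^sup>+t. ennreal (indicator {1..2} t * \<bar>t - u\<bar> powr (-1/2)) \<partial>lborel)
     \<le> (\<integral>\<^sup>+t. ennreal (indicator {1..2} t) + ennreal (indicator {-1..1} (t - u) * \<bar>t - u\<bar> powr (-1/2)) \<partial>lborel)"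
  proof (intro nn_integral_mono)
    fix t :: real
    have "indicator {1..2} t * \<bar>t - u\<bar> powr (-1/2) \<le> indicator {1..2} t + indicator {-1..1} (t - u) * \<bar>t - u\<bar> powr (-1/2)"
    proof (cases "\<bar>t - u\<bar> \<le> 1")
      case True then show ?thesis by (auto simp: indicator_def)
    next
      case False
      then have "\<bar>t - u\<bar> powr (-1/2) \<le> \<bar>t - u\<bar> powr 0"
        by (intro powr_mono) auto
      with False show ?thesis by (auto simp: indicator_def)
    qed
    then show "ennreal (indicator {1..2} t * \<bar>t - u\<bar> powr (-1/2)) \<le> ennreal (indicator {1..2} t) + ennreal (indicator {-1..1} (t - u) * \<bar>t - u\<bar> powr (-1/2))"
      by (simp add: ennreal_plus[symmetric] del: ennreal_plus)
  qed
  also have "\<dots> = (\<integral>\<^sup>+t. ennreal (indicator {1..2::real} t) \<partial>lborel) + (\<integral>\<^sup>+t. ennreal (indicator {-1..1} (t - u) * \<bar>t - u\<bar> powr (-1/2)) \<partial>lborel)"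
    by (subst nn_integral_add) auto
  also have "(\<integral>\<^sup>+t. ennreal (indicator {1..2::real} t) \<partial>lborel) = 1"
    by (simp add: ennreal_indicator nn_integral_indicator)
  also have "(\<integral>\<^sup>+t. ennreal (indicator {-1..1} (t - u) * \<bar>t - u\<bar> powr (-1/2)) \<partial>lborel)
      = ennreal \<bar>1\<bar> * (\<integral>\<^sup>+s. ennreal (indicator {-1..1} (u + 1 * s - u) * \<bar>u + 1 * s - u\<bar> powr (-1/2)) \<partial>lborel)"
    by (rule nn_integral_real_affine) auto
  also have "\<dots> = (\<integral>\<^sup>+s. ennreal (indicator {-1..1} s * \<bar>s\<bar> powr (-1/2)) \<partial>lborel)" by simp
  also have "1 + (\<integral>\<^sup>+s. ennreal (indicator {-1..1} s * \<bar>s\<bar> powr (-1/2)) \<partial>lborel) \<le> 1 + 4"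
    by (rule add_left_mono[OF int_sqrt11])
  also have "(1::ennreal) + 4 = 5" by simp
  finally show ?thesis .
qed



lemma ln_lower: fixes x :: real assumes "x > 0" shows "2 * (1 - x powr (-1/2)) \<le> ln x"
proof -
  define y where "y = x powr (1/2)"
  have y: "y > 0" using assms by (simp add: y_def)
  have "ln (1/y) \<le> 1/y - 1" using y by (intro ln_le_minus_one) auto
  moreover have "ln (1/y) = - (1/2) * ln x" using assms y by (simp add: y_def ln_div ln_powr)
  moreover have "1/y = x powr (-1/2)" using assms by (simp add: y_def powr_minus_divide)
  ultimately show ?thesis by simp
qed

lemma pow_lower: fixes x b :: real assumes "x > 0" "b \<ge> 0" shows "exp (2*b*(1 - x powr (-1/2))) \<le> x powr b"
proof -
  have "2*b*(1 - x powr (-1/2)) \<le> b * ln x"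
    using mult_left_mono[OF ln_lower[OF assms(1)] assms(2)] by (simp add: algebra_simps)
  then show ?thesis using assms by (simp add: powr_def)
qed

lemma pow_diff_ge: fixes v s :: real assumes "1 \<le> v" "v \<le> s" shows "s - v \<le> s ^ Suc n - v ^ Suc n"
proof (induction n)
  case 0 then show ?case by simp
next
  case (Suc n)
  have X: "0 \<le> s ^ Suc n - v ^ Suc n" using assms power_mono[OF assms(2), of "Suc n"] by simp
  have "s ^ Suc (Suc n) - v ^ Suc (Suc n) = s * (s ^ Suc n - v ^ Suc n) + v ^ Suc n * (s - v)"
    by (simp add: algebra_simps)
  moreover have "s * (s ^ Suc n - v ^ Suc n) \<ge> s ^ Suc n - v ^ Suc n"
    using mult_right_mono[of 1 s "s ^ Suc n - v ^ Suc n"] X assms by simp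
  moreover have "v ^ Suc n * (s - v) \<ge> 0" using assms by simp
  ultimately show ?case using Suc by linarith
qed

lemma u_exists: fixes w :: real assumes "a \<ge> (1::nat)" shows "\<exists>u. \<forall>t\<ge>1. \<bar>t - u\<bar> \<le> \<bar>w ^ a - t ^ a\<bar>"
proof (cases "w ^ a \<ge> (1::real)")
  case True
  define u where "u = root a (w ^ a)"
  have u1: "u \<ge> 1" using True assms by (simp add: u_def)
  have ua: "u ^ a = w ^ a" using True assms by (simp add: u_def)
  obtain k where k: "a = Suc k" using assms by (cases a) auto
  show ?thesis
  proof (intro exI allI impI)
    fix t :: real assume t: "t \<ge> 1"
    show "\<bar>t - u\<bar> \<le> \<bar>w ^ a - t ^ a\<bar>"
    proof (cases "t \<ge> u")
      case True
      with pow_diff_ge[OF u1 True, of k] ua k show ?thesis by auto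
    next
      case False
      with pow_diff_ge[OF t, of u k] ua k show ?thesis by auto
    qed
  qed
next
  case False
  show ?thesis
  proof (intro exI allI impI)
    fix t :: real assume t: "t \<ge> 1"
    have "t ^ 1 \<le> t ^ a" using t assms by (intro power_increasing) auto
    with False t show "\<bar>t - 1\<bar> \<le> \<bar>w ^ a - t ^ a\<bar>" by auto
  qed
qed



lemma jensen_part:
  fixes u :: "nat \<Rightarrow> real" and b :: real and m :: nat
  assumes b: "b > 0"
  defines "Y \<equiv> \<lambda>t. (\<Sum>i<m. 2*b*(1 - \<bar>t - u i\<bar> powr (-1/2)))"
  shows "ennreal (exp (-10*b*m)) \<le> (\<integral>\<^sup>+t. ennreal (indicator {1..2::real} t * exp (Y t)) \<partial>lborel)"
proof -
  define E where "E = exp (-10*b*m)"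
  have E: "E > 0" by (simp add: E_def)
  let ?g = "\<lambda>i t. indicator {1..2::real} t * \<bar>t - u i\<bar> powr (-1/2)"
  have pt: "ennreal (indicator {1..2::real} t * (E*(1+12*b*m)))
      \<le> ennreal (indicator {1..2::real} t * exp (Y t)) + (\<Sum>i<m. ennreal (E*2*b) * ennreal (?g i t))" for t
  proof -
    have "exp (Y t) = E * exp (Y t + 10*b*m)" by (simp add: E_def exp_add[symmetric])
    also have "E * exp (Y t + 10*b*m) \<ge> E * (1 + (Y t + 10*b*m))"
      using E by (intro mult_left_mono) auto
    finally have "E * (1 + (Y t + 10*b*m)) \<le> exp (Y t)" .
    moreover have "Y t = 2*b*m - 2*b*(\<Sum>i<m. \<bar>t - u i\<bar> powr (-1/2))"
      by (simp add: Y_def sum_subtractf sum_distrib_left algebra_simps)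
    ultimately have A: "E * (1 + (2*b*m - 2*b*(\<Sum>i<m. \<bar>t - u i\<bar> powr (-1/2)) + 10*b*m)) \<le> exp (Y t)"
      by simp
    have eq: "E * (1 + (2*b*m - 2*b*(\<Sum>i<m. \<bar>t - u i\<bar> powr (-1/2)) + 10*b*m)) = E*(1+12*b*m) - E*2*b*(\<Sum>i<m. \<bar>t - u i\<bar> powr (-1/2))"
      by (simp add: algebra_simps)
    have eq2: "(\<Sum>i<m. E*2*b * \<bar>t - u i\<bar> powr (-1/2)) = E*2*b*(\<Sum>i<m. \<bar>t - u i\<bar> powr (-1/2))"
      by (simp add: sum_distrib_left)
    have "E*(1+12*b*m) \<le> exp (Y t) + (\<Sum>i<m. E*2*b * \<bar>t - u i\<bar> powr (-1/2))"
      using A unfolding eq eq2 by linarith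
    then have R: "indicator {1..2::real} t * (E*(1+12*b*m)) \<le> indicator {1..2::real} t * exp (Y t) + (\<Sum>i<m. E*2*b * ?g i t)"
      by (auto simp: indicator_def sum_distrib_left algebra_simps)
    have "(\<Sum>i<m. ennreal (E*2*b) * ennreal (?g i t)) = ennreal (\<Sum>i<m. E*2*b * ?g i t)"
      using E b by (subst sum_ennreal[symmetric]) (auto simp: ennreal_mult indicator_def)
    moreover have "ennreal (indicator {1..2::real} t * exp (Y t)) + ennreal (\<Sum>i<m. E*2*b * ?g i t)
        = ennreal (indicator {1..2::real} t * exp (Y t) + (\<Sum>i<m. E*2*b * ?g i t))"
      using E b by (intro ennreal_plus[symmetric] sum_nonneg) auto
    moreover have "ennreal (indicator {1..2::real} t * (E*(1+12*b*m))) \<le> ennreal (indicator {1..2::real} t * exp (Y t) + (\<Sum>i<m. E*2*b * ?g i t))"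
      by (rule ennreal_leI[OF R])
    ultimately show ?thesis by simp
  qed
  have "ennreal (E*(1+12*b*m)) = (\<integral>\<^sup>+t. ennreal (indicator {1..2::real} t * (E*(1+12*b*m))) \<partial>lborel)"
  proof -
    have "(\<integral>\<^sup>+t. ennreal (indicator {1..2::real} t * (E*(1+12*b*m))) \<partial>lborel)
        = (\<integral>\<^sup>+t. ennreal (E*(1+12*b*m)) * indicator {1..2::real} t \<partial>lborel)"
      using E b by (intro nn_integral_cong) (auto simp: indicator_def)
    also have "\<dots> = ennreal (E*(1+12*b*m))"
      by (subst nn_integral_cmult_indicator) auto
    finally show ?thesis by simp
  qed
  also have "\<dots> \<le> (\<integral>\<^sup>+t. ennreal (indicator {1..2::real} t * exp (Y t)) + (\<Sum>i<m. ennreal (E*2*b) * ennreal (?g i t)) \<partial>lborel)"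
    by (intro nn_integral_mono pt)
  also have "\<dots> = (\<integral>\<^sup>+t. ennreal (indicator {1..2::real} t * exp (Y t)) \<partial>lborel) + (\<Sum>i<m. ennreal (E*2*b) * (\<integral>\<^sup>+t. ennreal (?g i t) \<partial>lborel))"
    unfolding Y_def
    by (subst nn_integral_add) (auto simp: nn_integral_sum nn_integral_cmult)
  also have "\<dots> \<le> (\<integral>\<^sup>+t. ennreal (indicator {1..2::real} t * exp (Y t)) \<partial>lborel) + (\<Sum>i<m. ennreal (E*2*b) * 5)"
    by (intro add_left_mono sum_mono mult_left_mono int_sqrt_shift) auto
  also have "(\<Sum>i<m. ennreal (E*2*b) * 5) = ennreal (10*b*m*E)"
  proof -
    have c5: "ennreal (E*2*b) * 5 = ennreal (E*2*b*5)" using ennreal_mult[of "E*2*b" 5] E b by simp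
    have "(\<Sum>i<m. ennreal (E*2*b*5)) = ennreal (\<Sum>i<m. E*2*b*5)"
      using E b by (intro sum_ennreal) auto
    then show ?thesis unfolding c5 by (simp add: algebra_simps)
  qed
  finally have F: "ennreal E + ennreal (12*b*m*E) \<le> (\<integral>\<^sup>+t. ennreal (indicator {1..2::real} t * exp (Y t)) \<partial>lborel) + ennreal (10*b*m*E)"
    using E b by (simp add: ennreal_plus[symmetric] algebra_simps del: ennreal_plus)
  have H: "ennreal E + ennreal (10*b*m*E) \<le> ennreal E + ennreal (12*b*m*E)"
    using E b by (intro add_left_mono) (auto intro!: mult_right_mono)
  from order_trans[OF H F] have "ennreal (10*b*m*E) + ennreal E \<le> ennreal (10*b*m*E) + (\<integral>\<^sup>+t. ennreal (indicator {1..2::real} t * exp (Y t)) \<partial>lborel)"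
    by (metis add.commute)
  then show ?thesis unfolding E_def[symmetric]
    by (simp add: ennreal_add_left_cancel_le)
qed



lemma rpow_nonneg[simp]: "0 \<le> rpow t e" by (simp add: rpow_def)

lemma lower1D:
  fixes x :: "nat \<Rightarrow> real" and b c \<beta> p :: real and a m :: nat
  assumes a: "a \<ge> 1" and b: "b > 0" and c: "c \<ge> 0" and \<beta>: "\<beta> \<ge> 0" and p: "p \<ge> 0"
  shows "ennreal (exp (-\<beta> * 2 powr p) * exp (-10*b*m)) \<le>
    (\<integral>\<^sup>+t. ennreal (exp (-\<beta>*\<bar>t\<bar> powr p) * (\<Prod>i<m. rpow \<bar>x i ^ a - t ^ a\<bar> b) * rpow \<bar>t\<bar> c) \<partial>lborel)"
proof -
  have "\<forall>i. \<exists>u. \<forall>t\<ge>1. \<bar>t - u\<bar> \<le> \<bar>x i ^ a - t ^ a\<bar>" using u_exists[OF a] by blast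
  then obtain u where u: "\<And>i t. t \<ge> 1 \<Longrightarrow> \<bar>t - u i\<bar> \<le> \<bar>x i ^ a - t ^ a\<bar>" by metis
  define Y where "Y = (\<lambda>t. (\<Sum>i<m. 2*b*(1 - \<bar>t - u i\<bar> powr (-1/2))))"
  define C where "C = exp (-\<beta> * 2 powr p)"
  have C: "C > 0" by (simp add: C_def)
  have pt: "ennreal (C * (indicator {1..2::real} t * exp (Y t))) \<le>
      ennreal (exp (-\<beta>*\<bar>t\<bar> powr p) * (\<Prod>i<m. rpow \<bar>x i ^ a - t ^ a\<bar> b) * rpow \<bar>t\<bar> c)"
    if t: "t \<notin> u ` {..<m}" for t
  proof (cases "t \<in> {1..2}")
    case False
    then show ?thesis by (auto simp: indicator_def)
  next
    case True
    have e1: "C \<le> exp (-\<beta>*\<bar>t\<bar> powr p)"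
      unfolding C_def using True \<beta> p by (auto intro!: mult_left_mono powr_mono2)
    have r1: "1 \<le> rpow \<bar>t\<bar> c"
      using True c by (auto simp: rpow_def intro!: ge_one_powr_ge_zero)
    have "exp (Y t) = (\<Prod>i<m. exp (2*b*(1 - \<bar>t - u i\<bar> powr (-1/2))))"
      by (simp add: Y_def exp_sum)
    also have "\<dots> \<le> (\<Prod>i<m. rpow \<bar>x i ^ a - t ^ a\<bar> b)"
    proof (intro prod_mono conjI)
      fix i assume i: "i \<in> {..<m}"
      have ne: "\<bar>t - u i\<bar> > 0" using t i by auto
      have "exp (2*b*(1 - \<bar>t - u i\<bar> powr (-1/2))) \<le> \<bar>t - u i\<bar> powr b"
        using pow_lower[OF ne] b by simp
      also have "\<dots> \<le> \<bar>x i ^ a - t ^ a\<bar> powr b"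
        using u[of t i] True b by (intro powr_mono2) auto
      finally show "exp (2*b*(1 - \<bar>t - u i\<bar> powr (-1/2))) \<le> rpow \<bar>x i ^ a - t ^ a\<bar> b"
        using b by (simp add: rpow_def)
    qed auto
    finally have P: "exp (Y t) \<le> (\<Prod>i<m. rpow \<bar>x i ^ a - t ^ a\<bar> b)" .
    have "C * exp (Y t) * 1 \<le> exp (-\<beta>*\<bar>t\<bar> powr p) * (\<Prod>i<m. rpow \<bar>x i ^ a - t ^ a\<bar> b) * rpow \<bar>t\<bar> c"
      using e1 P r1 C by (intro mult_mono) (auto intro!: prod_nonneg mult_nonneg_nonneg)
    then show ?thesis using True by (intro ennreal_leI) (simp add: indicator_def)
  qed
  have "ennreal (C * exp (-10*b*m)) = ennreal C * ennreal (exp (-10*b*m))"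
    using C by (simp add: ennreal_mult)
  also have "\<dots> \<le> ennreal C * (\<integral>\<^sup>+t. ennreal (indicator {1..2::real} t * exp (Y t)) \<partial>lborel)"
    unfolding Y_def by (intro mult_left_mono jensen_part b) auto
  also have "\<dots> = (\<integral>\<^sup>+t. ennreal C * ennreal (indicator {1..2::real} t * exp (Y t)) \<partial>lborel)"
    unfolding Y_def by (subst nn_integral_cmult) auto
  also have "\<dots> = (\<integral>\<^sup>+t. ennreal (C * (indicator {1..2::real} t * exp (Y t))) \<partial>lborel)"
    using C by (intro nn_integral_cong) (simp add: ennreal_mult)
  also have "\<dots> \<le> (\<integral>\<^sup>+t. ennreal (exp (-\<beta>*\<bar>t\<bar> powr p) * (\<Prod>i<m. rpow \<bar>x i ^ a - t ^ a\<bar> b) * rpow \<bar>t\<bar> c) \<partial>lborel)"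
  proof (rule nn_integral_mono_AE)
    have "AE t in lborel. t \<notin> u ` {..<m}"
      by (intro AE_not_in finite_imp_null_set_lborel) auto
    then show "AE t in lborel. ennreal (C * (indicator {1..2::real} t * exp (Y t))) \<le>
      ennreal (exp (-\<beta>*\<bar>t\<bar> powr p) * (\<Prod>i<m. rpow \<bar>x i ^ a - t ^ a\<bar> b) * rpow \<bar>t\<bar> c)"
      by eventually_elim (rule pt)
  qed
  finally show ?thesis unfolding C_def .
qed



definition NN :: "nat \<Rightarrow> real \<Rightarrow> real \<Rightarrow> real \<Rightarrow> real \<Rightarrow> nat \<Rightarrow> ennreal" where
  "NN a b c p \<beta> m = (\<integral>\<^sup>+x. ennreal (exp (-\<beta> * (\<Sum>i<m. \<bar>x i\<bar> powr p)) * f_abc a b c m x) \<partial>PiM {..<m} (\<lambda>_. lborel))"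

lemma f_abc_nonneg: "0 \<le> f_abc a b c m x"
  unfolding f_abc_def by (intro mult_nonneg_nonneg prod_nonneg) auto

lemma f_abc_Suc:
  "f_abc a b c (Suc m) (x(m := t)) = f_abc a b c m x * (\<Prod>i<m. rpow \<bar>x i ^ a - t ^ a\<bar> b) * rpow \<bar>t\<bar> c"
proof -
  let ?y = "x(m := t)"
  have inner: "(\<Prod>j\<in>{i<..<Suc m}. rpow \<bar>?y i ^ a - ?y j ^ a\<bar> b)
      = rpow \<bar>x i ^ a - t ^ a\<bar> b * (\<Prod>j\<in>{i<..<m}. rpow \<bar>x i ^ a - x j ^ a\<bar> b)" if i: "i < m" for i
  proof -
    have "{i<..<Suc m} = insert m {i<..<m}" using i by auto
    then show ?thesis using i by (simp add: prod.insert)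
  qed
  have "(\<Prod>i<Suc m. \<Prod>j\<in>{i<..<Suc m}. rpow \<bar>?y i ^ a - ?y j ^ a\<bar> b)
      = (\<Prod>i<m. \<Prod>j\<in>{i<..<Suc m}. rpow \<bar>?y i ^ a - ?y j ^ a\<bar> b)"
    by (simp add: lessThan_Suc)
  also have "\<dots> = (\<Prod>i<m. rpow \<bar>x i ^ a - t ^ a\<bar> b * (\<Prod>j\<in>{i<..<m}. rpow \<bar>x i ^ a - x j ^ a\<bar> b))"
    by (intro prod.cong refl inner) auto
  also have "\<dots> = (\<Prod>i<m. rpow \<bar>x i ^ a - t ^ a\<bar> b) * (\<Prod>i<m. \<Prod>j\<in>{i<..<m}. rpow \<bar>x i ^ a - x j ^ a\<bar> b)"
    by (rule prod.distrib)
  finally have A: "(\<Prod>i<Suc m. \<Prod>j\<in>{i<..<Suc m}. rpow \<bar>?y i ^ a - ?y j ^ a\<bar> b) =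
     (\<Prod>i<m. rpow \<bar>x i ^ a - t ^ a\<bar> b) * (\<Prod>i<m. \<Prod>j\<in>{i<..<m}. rpow \<bar>x i ^ a - x j ^ a\<bar> b)" .
  have B: "(\<Prod>i<Suc m. rpow \<bar>?y i\<bar> c) = (\<Prod>i<m. rpow \<bar>x i\<bar> c) * rpow \<bar>t\<bar> c"
    by (simp add: lessThan_Suc)
  show ?thesis unfolding f_abc_def A B by (simp add: algebra_simps)
qed

lemma NN_zero: "NN a b c p \<beta> 0 = 1"
  by (simp add: NN_def f_abc_def PiM_empty nn_integral_count_space_finite)

lemma NN_step:
  fixes a :: nat and b c p \<beta> :: real
  assumes a: "a \<ge> 1" and b: "b > 0" and c: "c \<ge> 0" and \<beta>: "\<beta> \<ge> 0" and p: "p \<ge> 0"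
  shows "ennreal (exp (-\<beta> * 2 powr p) * exp (-10*b*m)) * NN a b c p \<beta> m \<le> NN a b c p \<beta> (Suc m)"
proof -
  interpret product_sigma_finite "\<lambda>_::nat. lborel :: real measure" by standard
  define K where "K = exp (-\<beta> * 2 powr p) * exp (-10*b*m)"
  define G where "G = (\<lambda>m x. ennreal (exp (-\<beta> * (\<Sum>i<m. \<bar>x i\<bar> powr p)) * f_abc a b c m x))"
  have Gm[measurable]: "G m \<in> borel_measurable (PiM {..<m} (\<lambda>_. lborel))" for m
    unfolding G_def f_abc_def by measurable
  have "NN a b c p \<beta> (Suc m) = integral\<^sup>N (PiM (insert m {..<m}) (\<lambda>_. lborel)) (G (Suc m))"
    by (simp add: NN_def G_def lessThan_Suc)
  also have "\<dots> = (\<integral>\<^sup>+x. (\<integral>\<^sup>+t. G (Suc m) (x(m := t)) \<partial>lborel) \<partial>PiM {..<m} (\<lambda>_. lborel))"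
    using Gm[of "Suc m"] by (intro product_nn_integral_insert) (auto simp: lessThan_Suc)
  also have "\<dots> \<ge> (\<integral>\<^sup>+x. ennreal K * G m x \<partial>PiM {..<m} (\<lambda>_. lborel))"
  proof (intro nn_integral_mono)
    fix x :: "nat \<Rightarrow> real"
    define h where "h = (\<lambda>t. exp (-\<beta>*\<bar>t\<bar> powr p) * (\<Prod>i<m. rpow \<bar>x i ^ a - t ^ a\<bar> b) * rpow \<bar>t\<bar> c)"
    have eq: "G (Suc m) (x(m := t)) = G m x * ennreal (h t)" for t
    proof -
      have S: "(\<Sum>i<Suc m. \<bar>(x(m := t)) i\<bar> powr p) = (\<Sum>i<m. \<bar>x i\<bar> powr p) + \<bar>t\<bar> powr p"
        by (simp add: lessThan_Suc)
      have "exp (-\<beta> * (\<Sum>i<Suc m. \<bar>(x(m := t)) i\<bar> powr p)) * f_abc a b c (Suc m) (x(m := t))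
         = (exp (-\<beta> * (\<Sum>i<m. \<bar>x i\<bar> powr p)) * f_abc a b c m x) * h t"
        unfolding S f_abc_Suc h_def by (simp add: algebra_simps exp_add[symmetric])
      then show ?thesis unfolding G_def
        by (simp add: ennreal_mult[symmetric] f_abc_nonneg h_def prod_nonneg)
    qed
    have hm: "(\<lambda>t. ennreal (h t)) \<in> borel_measurable lborel" unfolding h_def by measurable
    have "ennreal K * G m x = G m x * ennreal K" by (simp add: mult.commute)
    also have "\<dots> \<le> G m x * (\<integral>\<^sup>+t. ennreal (h t) \<partial>lborel)"
      unfolding K_def h_def by (intro mult_left_mono lower1D assms) auto
    also have "\<dots> = (\<integral>\<^sup>+t. G (Suc m) (x(m := t)) \<partial>lborel)"
      unfolding eq using hm by (simp add: nn_integral_cmult)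
    finally show "ennreal K * G m x \<le> (\<integral>\<^sup>+t. G (Suc m) (x(m := t)) \<partial>lborel)" .
  qed
  also have "(\<integral>\<^sup>+x. ennreal K * G m x \<partial>PiM {..<m} (\<lambda>_. lborel)) = ennreal K * NN a b c p \<beta> m"
    by (simp add: nn_integral_cmult NN_def G_def)
  finally show ?thesis unfolding K_def .
qed



lemma pow_exp_bound: fixes y :: real assumes "y \<ge> 0" shows "y ^ N \<le> real N ^ N * exp y"
proof (cases "N = 0")
  case True then show ?thesis using assms by simp
next
  case False
  have "y / N \<le> exp (y / N)" using exp_ge_add_one_self[of "y/N"] by linarith
  then have "(y / N) ^ N \<le> exp (y / N) ^ N" using assms by (intro power_mono) auto
  also have "\<dots> = exp y" using False by (simp add: exp_of_nat_mult[symmetric])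
  finally have "(y / N) ^ N \<le> exp y" .
  then have "real N ^ N * (y / N) ^ N \<le> real N ^ N * exp y" by (intro mult_left_mono) auto
  moreover have "real N ^ N * (y / N) ^ N = y ^ N" using False by (simp add: power_divide)
  ultimately show ?thesis by simp
qed

lemma H_bound:
  fixes \<beta> K p s :: real
  assumes \<beta>: "\<beta> > 0" and K: "K \<ge> 0" and p: "p \<ge> 1"
  shows "exp (-\<beta> * \<bar>s\<bar> powr p) * (1 + \<bar>s\<bar>) powr K \<le>
    (exp (2*\<beta>) * (real (nat \<lceil>K+2\<rceil>) / \<beta>) ^ nat \<lceil>K+2\<rceil>) * inverse (1 + s^2)"
proof -
  define r where "r = \<bar>s\<bar>"
  define N where "N = nat \<lceil>K+2\<rceil>"
  have r: "r \<ge> 0" by (simp add: r_def)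
  have rp: "r - 1 \<le> r powr p"
  proof (cases "r \<ge> 1")
    case True
    then have "r powr 1 \<le> r powr p" using p by (intro powr_mono) auto
    with True show ?thesis by simp
  next
    case False then have "r - 1 \<le> 0" by simp
    then show ?thesis using powr_ge_zero[of r p] by linarith
  qed
  have e: "exp (-\<beta> * r powr p) \<le> exp (2*\<beta>) * exp (-(\<beta>*(1+r)))"
  proof -
    have m: "\<beta>*(r-1) \<le> \<beta>*(r powr p)" using rp \<beta> by (intro mult_left_mono) auto
    have "-\<beta> * r powr p \<le> 2*\<beta> + -(\<beta>*(1+r))" using m by (simp add: algebra_simps)
    then have "exp (-\<beta> * r powr p) \<le> exp (2*\<beta> + -(\<beta>*(1+r)))" by (simp only: exp_le_cancel_iff)
    also have "exp (2*\<beta> + -(\<beta>*(1+r))) = exp (2*\<beta>) * exp (-(\<beta>*(1+r)))" by (rule exp_add)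
    finally show ?thesis .
  qed
  have q: "(1 + r) powr K * (1 + s^2) \<le> (1 + r) ^ N"
  proof -
    have s2: "s^2 = r^2" by (simp add: r_def)
    have "(1 + r)^2 = 1 + 2*r + r^2" by (simp add: power2_eq_square algebra_simps)
    then have "1 + s^2 \<le> (1 + r)^2" using r s2 by linarith
    also have "(1 + r)^2 = (1 + r) powr 2" using powr_realpow[of "1+r" 2] r by simp
    finally have "(1 + r) powr K * (1 + s^2) \<le> (1 + r) powr K * (1 + r) powr 2"
      by (intro mult_left_mono) auto
    also have "\<dots> = (1 + r) powr (K + 2)" by (rule powr_add[symmetric])
    also have "\<dots> \<le> (1 + r) powr (real N)" unfolding N_def using r K
      by (intro powr_mono) auto
    also have "\<dots> = (1 + r) ^ N" using r by (simp add: powr_realpow)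
    finally show ?thesis .
  qed
  have w: "(1 + r) ^ N \<le> (real N / \<beta>) ^ N * exp (\<beta>*(1+r))"
  proof -
    have A: "(\<beta>*(1+r)) ^ N \<le> real N ^ N * exp (\<beta>*(1+r))" using \<beta> r by (intro pow_exp_bound) auto
    have B: "(\<beta>*(1+r)) ^ N = \<beta>^N * (1+r)^N" by (rule power_mult_distrib)
    have eq: "\<beta>^N * ((real N / \<beta>) ^ N * exp (\<beta>*(1+r))) = real N ^ N * exp (\<beta>*(1+r))"
    proof -
      have "(real N / \<beta>) ^ N = real N ^ N / \<beta> ^ N" by (rule power_divide)
      moreover have "\<beta> ^ N > 0" using \<beta> by simp
      ultimately show ?thesis using \<beta> by (simp add: field_simps)
    qed
    have "\<beta>^N * (1+r)^N \<le> \<beta>^N * ((real N / \<beta>) ^ N * exp (\<beta>*(1+r)))"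
      unfolding eq using A unfolding B .
    then show ?thesis using \<beta> by (simp add: mult_le_cancel_left_pos)
  qed
  have "exp (-\<beta> * r powr p) * (1 + r) powr K * (1 + s^2) \<le> exp (2*\<beta>) * exp (-(\<beta>*(1+r))) * ((real N / \<beta>) ^ N * exp (\<beta>*(1+r)))"
  proof -
    have B: "(1 + r) powr K * (1 + s^2) \<le> (real N / \<beta>) ^ N * exp (\<beta>*(1+r))" using q w by linarith
    have "exp (-\<beta> * r powr p) * ((1 + r) powr K * (1 + s^2)) \<le> (exp (2*\<beta>) * exp (-(\<beta>*(1+r)))) * ((real N / \<beta>) ^ N * exp (\<beta>*(1+r)))"
      by (rule mult_mono[OF e B]) (auto intro!: mult_nonneg_nonneg)
    then show ?thesis by (simp add: mult.assoc)
  qed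
  also have "\<dots> = exp (2*\<beta>) * (real N / \<beta>) ^ N"
  proof -
    have "exp (-(\<beta>*(1+r))) * exp (\<beta>*(1+r)) = 1" by (simp add: exp_minus)
    moreover have "exp (2*\<beta>) * exp (-(\<beta>*(1+r))) * ((real N / \<beta>) ^ N * exp (\<beta>*(1+r)))
       = exp (2*\<beta>) * (real N / \<beta>) ^ N * (exp (-(\<beta>*(1+r))) * exp (\<beta>*(1+r)))" by (simp only: mult_ac)
    ultimately show ?thesis by simp
  qed
  finally have "exp (-\<beta> * r powr p) * (1 + r) powr K * (1 + s^2) \<le> exp (2*\<beta>) * (real N / \<beta>) ^ N" .
  moreover have "1 + s^2 > 0" by (simp add: add_pos_nonneg)
  ultimately have "exp (-\<beta> * r powr p) * (1 + r) powr K \<le> (exp (2*\<beta>) * (real N / \<beta>) ^ N) / (1 + s^2)"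
    by (simp add: pos_le_divide_eq)
  then show ?thesis unfolding r_def N_def by (simp add: divide_inverse)
qed

lemma H_finite:
  fixes \<beta> K p :: real
  assumes \<beta>: "\<beta> > 0" and K: "K \<ge> 0" and p: "p \<ge> 1"
  shows "(\<integral>\<^sup>+s. ennreal (exp (-\<beta> * \<bar>s\<bar> powr p) * (1 + \<bar>s\<bar>) powr K) \<partial>lborel) < \<infinity>"
proof -
  define D where "D = exp (2*\<beta>) * (real (nat \<lceil>K+2\<rceil>) / \<beta>) ^ nat \<lceil>K+2\<rceil>"
  have D: "D \<ge> 0" using \<beta> by (simp add: D_def)
  have "integrable lborel (\<lambda>x::real. inverse (1 + x^2))"
    using integrable_inverse_1_plus_square by (simp add: set_integrable_def)
  then have fin: "(\<integral>\<^sup>+x. ennreal (norm (inverse (1 + (x::real)^2))) \<partial>lborel) < \<infinity>"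
    by (simp add: integrable_iff_bounded)
  have "(\<integral>\<^sup>+s. ennreal (exp (-\<beta> * \<bar>s\<bar> powr p) * (1 + \<bar>s\<bar>) powr K) \<partial>lborel)
      \<le> (\<integral>\<^sup>+s. ennreal D * ennreal (norm (inverse (1 + (s::real)^2))) \<partial>lborel)"
  proof (intro nn_integral_mono)
    fix s :: real
    have "0 < 1 + s^2" by (simp add: add_pos_nonneg)
    then show "ennreal (exp (-\<beta> * \<bar>s\<bar> powr p) * (1 + \<bar>s\<bar>) powr K) \<le> ennreal D * ennreal (norm (inverse (1 + s^2)))"
      using H_bound[OF assms, of s] D unfolding D_def[symmetric]
      by (simp add: ennreal_mult[symmetric] del: ennreal_mult')
  qed
  also have "\<dots> = ennreal D * (\<integral>\<^sup>+x. ennreal (norm (inverse (1 + (x::real)^2))) \<partial>lborel)"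
    by (rule nn_integral_cmult) measurable
  also have "\<dots> < \<infinity>" using fin by (simp add: ennreal_mult_less_top)
  finally show ?thesis .
qed



lemma le_R: fixes x :: "nat \<Rightarrow> real" assumes "k < m" shows "1 + \<bar>x k\<bar> \<le> (\<Prod>i<m. 1 + \<bar>x i\<bar>)"
proof -
  have "(\<Prod>i<m. 1 + \<bar>x i\<bar>) = (1 + \<bar>x k\<bar>) * (\<Prod>i\<in>{..<m} - {k}. 1 + \<bar>x i\<bar>)"
    using assms by (subst prod.remove[of _ k]) auto
  moreover have "1 \<le> (\<Prod>i\<in>{..<m} - {k}. 1 + \<bar>x i\<bar>)" by (intro prod_ge_1) auto
  ultimately show ?thesis by (simp add: mult_le_cancel_left1)
qed

lemma R_ge1: fixes x :: "nat \<Rightarrow> real" shows "1 \<le> (\<Prod>i<m. 1 + \<bar>x i\<bar>)"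
  by (intro prod_ge_1) auto

lemma f_abc_upper:
  fixes x :: "nat \<Rightarrow> real" and a m :: nat and b c :: real
  assumes b: "b > 0" and c: "c \<ge> 0"
  defines "R \<equiv> (\<Prod>i<m. 1 + \<bar>x i\<bar>)"
  shows "f_abc a b c m x \<le> ((2 powr b * R powr (a*b)) ^ m) ^ m * (R powr c) ^ m"
proof -
  have R1: "1 \<le> R" unfolding R_def by (rule R_ge1)
  define Q where "Q = 2 powr b * R powr (a*b)"
  have Q1: "1 \<le> Q" unfolding Q_def using R1 b
    by (intro mult_ge1_I ge_one_powr_ge_zero) auto
  have pair: "rpow \<bar>x i ^ a - x j ^ a\<bar> b \<le> Q" if "i < m" "j < m" for i j
  proof -
    have "\<bar>x i\<bar> \<le> R" "\<bar>x j\<bar> \<le> R" using le_R[OF that(1), of x] le_R[OF that(2), of x] by (auto simp: R_def)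
    then have "\<bar>x i\<bar> ^ a \<le> R ^ a" "\<bar>x j\<bar> ^ a \<le> R ^ a" by (auto intro: power_mono)
    moreover have "\<bar>x i ^ a - x j ^ a\<bar> \<le> \<bar>x i ^ a\<bar> + \<bar>x j ^ a\<bar>" by (rule abs_triangle_ineq4)
    ultimately have "\<bar>x i ^ a - x j ^ a\<bar> \<le> 2 * R ^ a" by (simp add: power_abs)
    then have "\<bar>x i ^ a - x j ^ a\<bar> powr b \<le> (2 * R ^ a) powr b" using b by (intro powr_mono2) auto
    also have "\<dots> = 2 powr b * (R ^ a) powr b" using R1 by (simp add: powr_mult)
    also have "(R ^ a) powr b = R powr (a*b)" using R1
      by (simp add: powr_realpow[symmetric] powr_powr del: powr_realpow)
    finally show ?thesis using b by (simp add: rpow_def Q_def)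
  qed
  have inner: "(\<Prod>j\<in>{i<..<m}. rpow \<bar>x i ^ a - x j ^ a\<bar> b) \<le> Q ^ m" if i: "i < m" for i
  proof -
    have "(\<Prod>j\<in>{i<..<m}. rpow \<bar>x i ^ a - x j ^ a\<bar> b) \<le> (\<Prod>j\<in>{i<..<m}. Q)"
      using i by (intro prod_mono) (auto intro: pair)
    also have "\<dots> = Q ^ card {i<..<m}" by simp
    also have "\<dots> \<le> Q ^ m" using Q1 by (intro power_increasing) auto
    finally show ?thesis .
  qed
  have P1: "(\<Prod>i<m. \<Prod>j\<in>{i<..<m}. rpow \<bar>x i ^ a - x j ^ a\<bar> b) \<le> (Q ^ m) ^ m"
  proof -
    have "(\<Prod>i<m. \<Prod>j\<in>{i<..<m}. rpow \<bar>x i ^ a - x j ^ a\<bar> b) \<le> (\<Prod>i<m. Q ^ m)"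
      by (intro prod_mono conjI prod_nonneg inner) auto
    then show ?thesis by simp
  qed
  have P2: "(\<Prod>i<m. rpow \<bar>x i\<bar> c) \<le> (R powr c) ^ m"
  proof -
    have "(\<Prod>i<m. rpow \<bar>x i\<bar> c) \<le> (\<Prod>i<m. R powr c)"
    proof (intro prod_mono conjI)
      fix i assume i: "i \<in> {..<m}"
      have "\<bar>x i\<bar> \<le> R" using le_R[of i m x] i by (auto simp: R_def)
      then show "rpow \<bar>x i\<bar> c \<le> R powr c"
        using c R1 by (auto simp: rpow_def intro: powr_mono2)
    qed auto
    then show ?thesis by simp
  qed
  show ?thesis unfolding f_abc_def Q_def[symmetric]
    using P1 P2 Q1 by (intro mult_mono) (auto intro!: prod_nonneg)
qed



lemma powr_pow_nat: fixes R e :: real assumes "R > 0" shows "(R powr e) ^ n = R powr (e * n)"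
  using assms by (simp add: powr_realpow[symmetric] powr_powr del: powr_realpow)

lemma NN_finite:
  fixes a :: nat and b c p \<beta> :: real
  assumes a: "a \<ge> 1" and b: "b > 0" and c: "c \<ge> 0" and \<beta>: "\<beta> > 0" and p: "p \<ge> 1"
  shows "NN a b c p \<beta> m < \<infinity>"
proof -
  interpret product_sigma_finite "\<lambda>_::nat. lborel :: real measure" by standard
  define K where "K = a*b*m*m + c*m"
  have K: "K \<ge> 0" using b c by (simp add: K_def)
  define C0 where "C0 = ((2 powr b) ^ m) ^ m"
  have C0: "C0 \<ge> 0" by (simp add: C0_def)
  define H where "H = (\<lambda>s::real. exp (-\<beta> * \<bar>s\<bar> powr p) * (1 + \<bar>s\<bar>) powr K)"
  have pt: "exp (-\<beta> * (\<Sum>i<m. \<bar>x i\<bar> powr p)) * f_abc a b c m x \<le> C0 * (\<Prod>k<m. H (x k))" for x :: "nat \<Rightarrow> real"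
  proof -
    define R where "R = (\<Prod>i<m. 1 + \<bar>x i\<bar>)"
    have R1: "1 \<le> R" unfolding R_def by (rule R_ge1)
    have "f_abc a b c m x \<le> ((2 powr b * R powr (a*b)) ^ m) ^ m * (R powr c) ^ m"
      unfolding R_def using b c by (rule f_abc_upper)
    also have "\<dots> = C0 * R powr K"
    proof -
      have "((2 powr b * R powr (a*b)) ^ m) ^ m = C0 * ((R powr (a*b)) ^ m) ^ m"
        by (simp add: C0_def power_mult_distrib)
      also have "((R powr (a*b)) ^ m) ^ m = R powr (a*b*m*m)"
        using R1 by (simp add: powr_pow_nat)
      finally have A: "((2 powr b * R powr (a*b)) ^ m) ^ m = C0 * R powr (a*b*m*m)" .
      have B: "(R powr c) ^ m = R powr (c*m)" using R1 by (simp add: powr_pow_nat)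
      show ?thesis unfolding A B K_def by (simp add: powr_add mult.assoc)
    qed
    also have "R powr K = (\<Prod>k<m. (1 + \<bar>x k\<bar>) powr K)"
      unfolding R_def by (rule prod_powr_distrib)
    finally have F: "f_abc a b c m x \<le> C0 * (\<Prod>k<m. (1 + \<bar>x k\<bar>) powr K)" .
    have E: "exp (-\<beta> * (\<Sum>i<m. \<bar>x i\<bar> powr p)) = (\<Prod>k<m. exp (-\<beta> * \<bar>x k\<bar> powr p))"
      by (simp add: sum_distrib_left exp_sum)
    have "exp (-\<beta> * (\<Sum>i<m. \<bar>x i\<bar> powr p)) * f_abc a b c m x
        \<le> (\<Prod>k<m. exp (-\<beta> * \<bar>x k\<bar> powr p)) * (C0 * (\<Prod>k<m. (1 + \<bar>x k\<bar>) powr K))"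
      unfolding E by (intro mult_left_mono F prod_nonneg) auto
    also have "\<dots> = C0 * (\<Prod>k<m. H (x k))"
      by (simp add: H_def prod.distrib)
    finally show ?thesis .
  qed
  have "NN a b c p \<beta> m \<le> (\<integral>\<^sup>+x. ennreal C0 * (\<Prod>k<m. ennreal (H (x k))) \<partial>PiM {..<m} (\<lambda>_. lborel))"
    unfolding NN_def
  proof (intro nn_integral_mono)
    fix x :: "nat \<Rightarrow> real"
    have "(\<Prod>k<m. ennreal (H (x k))) = ennreal (\<Prod>k<m. H (x k))"
      by (rule prod_ennreal) (simp add: H_def)
    then show "ennreal (exp (-\<beta> * (\<Sum>i<m. \<bar>x i\<bar> powr p)) * f_abc a b c m x) \<le> ennreal C0 * (\<Prod>k<m. ennreal (H (x k)))"
    proof -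
      have P: "0 \<le> (\<Prod>k<m. H (x k))" by (intro prod_nonneg) (simp add: H_def)
      have "ennreal C0 * ennreal (\<Prod>k<m. H (x k)) = ennreal (C0 * (\<Prod>k<m. H (x k)))"
        using P C0 by (simp add: ennreal_mult)
      then show ?thesis using pt[of x] \<open>(\<Prod>k<m. ennreal (H (x k))) = ennreal (\<Prod>k<m. H (x k))\<close>
        by (simp add: ennreal_leI)
    qed
  qed
  also have "\<dots> = ennreal C0 * (\<integral>\<^sup>+x. (\<Prod>k<m. ennreal (H (x k))) \<partial>PiM {..<m} (\<lambda>_. lborel))"
    by (rule nn_integral_cmult) (unfold H_def, measurable)
  also have "(\<integral>\<^sup>+x. (\<Prod>k<m. ennreal (H (x k))) \<partial>PiM {..<m} (\<lambda>_. lborel)) = (\<Prod>k<m. \<integral>\<^sup>+s. ennreal (H s) \<partial>lborel)"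
    by (rule product_nn_integral_prod) (auto simp: H_def)
  also have "ennreal C0 * (\<Prod>k<m. \<integral>\<^sup>+s. ennreal (H s) \<partial>lborel) < \<infinity>"
  proof -
    have "(\<integral>\<^sup>+s. ennreal (H s) \<partial>lborel) < \<infinity>" unfolding H_def by (rule H_finite[OF \<beta> K p])
    then have "(\<Prod>k<m. \<integral>\<^sup>+s. ennreal (H s) \<partial>lborel) \<noteq> \<infinity>"
      by (simp add: power_eq_top_ennreal less_top)
    then show ?thesis by (simp add: ennreal_mult_less_top less_top)
  qed
  finally show ?thesis .
qed



lemma f_abc_cong: "(\<And>i. i < m \<Longrightarrow> x i = y i) \<Longrightarrow> f_abc a b c m x = f_abc a b c m y"
  unfolding f_abc_def by (intro arg_cong2[where f="(*)"] prod.cong refl) auto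

lemma pair_scale:
  fixes l u v b :: real assumes l: "l > 0" and b: "b > 0"
  shows "rpow \<bar>(l * u) ^ a - (l * v) ^ a\<bar> b = l powr (a*b) * rpow \<bar>u ^ a - v ^ a\<bar> b"
proof -
  have "\<bar>(l * u) ^ a - (l * v) ^ a\<bar> = l ^ a * \<bar>u ^ a - v ^ a\<bar>"
    using l by (simp add: power_mult_distrib abs_mult right_diff_distrib[symmetric])
  moreover have "(l ^ a) powr b = l powr (a*b)"
    using l by (simp add: powr_realpow[symmetric] powr_powr del: powr_realpow)
  ultimately show ?thesis using b l by (simp add: rpow_def powr_mult)
qed

lemma c_scale:
  fixes l u c :: real assumes l: "l > 0"
  shows "rpow \<bar>l * u\<bar> c = l powr c * rpow \<bar>u\<bar> c"
  using l by (cases "c = 0") (auto simp: rpow_def abs_mult powr_mult)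

lemma f_abc_scale:
  fixes l b c :: real and a n :: nat
  assumes l: "l > 0" "l \<le> 1" and b: "b > 0"
  shows "((l powr (a*b)) ^ n) ^ n * (l powr c) ^ n * f_abc a b c n w \<le> f_abc a b c n (\<lambda>i. l * w i)"
proof -
  define k where "k = l powr (a*b)"
  have k: "0 \<le> k" "k \<le> 1" using l b by (auto simp: k_def intro: powr_le1)
  define P where "P = (\<lambda>i j. rpow \<bar>w i ^ a - w j ^ a\<bar> b)"
  have inner: "k ^ n * (\<Prod>j\<in>{i<..<n}. P i j) \<le> (\<Prod>j\<in>{i<..<n}. rpow \<bar>(l * w i) ^ a - (l * w j) ^ a\<bar> b)" for i
  proof -
    have "(\<Prod>j\<in>{i<..<n}. rpow \<bar>(l * w i) ^ a - (l * w j) ^ a\<bar> b) = (\<Prod>j\<in>{i<..<n}. k * P i j)"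
      unfolding P_def k_def using l b by (intro prod.cong refl pair_scale) auto
    also have "\<dots> = k ^ card {i<..<n} * (\<Prod>j\<in>{i<..<n}. P i j)" by (simp add: prod.distrib)
    finally have eq: "(\<Prod>j\<in>{i<..<n}. rpow \<bar>(l * w i) ^ a - (l * w j) ^ a\<bar> b) = k ^ card {i<..<n} * (\<Prod>j\<in>{i<..<n}. P i j)" .
    have "k ^ n \<le> k ^ card {i<..<n}" using k by (intro power_decreasing) auto
    then show ?thesis unfolding eq by (intro mult_right_mono) (auto simp: P_def intro!: prod_nonneg)
  qed
  have A: "(k ^ n) ^ n * (\<Prod>i<n. \<Prod>j\<in>{i<..<n}. P i j) \<le> (\<Prod>i<n. \<Prod>j\<in>{i<..<n}. rpow \<bar>(l * w i) ^ a - (l * w j) ^ a\<bar> b)"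
  proof -
    have "(k ^ n) ^ n * (\<Prod>i<n. \<Prod>j\<in>{i<..<n}. P i j) = (\<Prod>i<n. k ^ n * (\<Prod>j\<in>{i<..<n}. P i j))"
      by (simp add: prod.distrib)
    also have "\<dots> \<le> (\<Prod>i<n. \<Prod>j\<in>{i<..<n}. rpow \<bar>(l * w i) ^ a - (l * w j) ^ a\<bar> b)"
      using k by (intro prod_mono conjI inner) (auto simp: P_def intro!: prod_nonneg mult_nonneg_nonneg)
    finally show ?thesis .
  qed
  have B: "(\<Prod>i<n. rpow \<bar>l * w i\<bar> c) = (l powr c) ^ n * (\<Prod>i<n. rpow \<bar>w i\<bar> c)"
    using l by (simp add: c_scale prod.distrib)
  have "((l powr (a*b)) ^ n) ^ n * (l powr c) ^ n * f_abc a b c n w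
      = ((k ^ n) ^ n * (\<Prod>i<n. \<Prod>j\<in>{i<..<n}. P i j)) * ((l powr c) ^ n * (\<Prod>i<n. rpow \<bar>w i\<bar> c))"
    by (simp add: f_abc_def k_def P_def mult_ac)
  also have "\<dots> \<le> (\<Prod>i<n. \<Prod>j\<in>{i<..<n}. rpow \<bar>(l * w i) ^ a - (l * w j) ^ a\<bar> b) * (\<Prod>i<n. rpow \<bar>l * w i\<bar> c)"
    unfolding B by (intro mult_right_mono A) (auto intro!: prod_nonneg mult_nonneg_nonneg)
  also have "\<dots> = f_abc a b c n (\<lambda>i. l * w i)" by (simp add: f_abc_def)
  finally show ?thesis .
qed



lemma NN_pos:
  fixes a :: nat and b c p \<beta> :: real
  assumes a: "a \<ge> 1" and b: "b > 0" and c: "c \<ge> 0" and \<beta>: "\<beta> \<ge> 0" and p: "p \<ge> 0"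
  shows "NN a b c p \<beta> m > 0"
proof (induction m)
  case 0 then show ?case by (simp add: NN_zero)
next
  case (Suc m)
  have "0 < ennreal (exp (-\<beta> * 2 powr p) * exp (-10*b*m)) * NN a b c p \<beta> m"
    using Suc by (simp add: ennreal_zero_less_mult_iff)
  also have "\<dots> \<le> NN a b c p \<beta> (Suc m)" by (rule NN_step[OF assms])
  finally show ?case .
qed

lemma NN_scale:
  fixes a n :: nat and b c p \<alpha> :: real
  assumes n: "n \<ge> 2" and a: "a \<ge> 1" and b: "b > 0" and c: "c \<ge> 0" and \<alpha>: "\<alpha> > 0" and p: "p \<ge> 1"
  shows "ennreal (((real n - 1) / real n) powr ((real n + a*b*n*n + c*n) / p)) * NN a b c p (\<alpha> * (real n - 1)) n
     \<le> NN a b c p (\<alpha> * real n) n"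
proof -
  define q where "q = (real n - 1) / real n"
  have q: "q > 0" "q \<le> 1" using n by (auto simp: q_def)
  define l where "l = q powr (1/p)"
  have l: "l > 0" "l \<le> 1" using q p by (auto simp: l_def intro: powr_le1)
  have lp: "l powr p = q" using q p by (simp add: l_def powr_powr)
  define g where "g = (\<lambda>x. ennreal (exp (-(\<alpha> * real n) * (\<Sum>i<n. \<bar>x i\<bar> powr p)) * f_abc a b c n x))"
  have gm: "g \<in> borel_measurable (PiM {..<n} (\<lambda>_. lborel))" unfolding g_def by measurable
  define M where "M = ((l powr (a*b)) ^ n) ^ n * (l powr c) ^ n"
  have M: "M \<ge> 0" by (simp add: M_def)
  have E: "NN a b c p (\<alpha> * real n) n = ennreal (l ^ card {..<n}) * (\<integral>\<^sup>+x. g (\<lambda>i\<in>{..<n}. l * x i) \<partial>PiM {..<n} (\<lambda>_. lborel))"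
  proof -
    have "NN a b c p (\<alpha> * real n) n = (\<integral>\<^sup>+x. g x \<partial>PiM {..<n} (\<lambda>_. lborel))"
      by (simp add: NN_def g_def)
    also have "\<dots> = ennreal (l ^ card {..<n}) * (\<integral>\<^sup>+x. g (\<lambda>i\<in>{..<n}. l * x i) \<partial>PiM {..<n} (\<lambda>_. lborel))"
      using l by (intro scale_PiM gm) auto
    finally show ?thesis .
  qed
  have I1: "(\<integral>\<^sup>+x. ennreal M * ennreal (exp (-(\<alpha> * (real n - 1)) * (\<Sum>i<n. \<bar>x i\<bar> powr p)) * f_abc a b c n x) \<partial>PiM {..<n} (\<lambda>_. lborel))
      \<le> (\<integral>\<^sup>+x. g (\<lambda>i\<in>{..<n}. l * x i) \<partial>PiM {..<n} (\<lambda>_. lborel))"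
  proof (intro nn_integral_mono)
    fix x :: "nat \<Rightarrow> real"
    have S: "(\<Sum>i<n. \<bar>(\<lambda>i\<in>{..<n}. l * x i) i\<bar> powr p) = q * (\<Sum>i<n. \<bar>x i\<bar> powr p)"
    proof -
      have "(\<Sum>i<n. \<bar>(\<lambda>i\<in>{..<n}. l * x i) i\<bar> powr p) = (\<Sum>i<n. l powr p * \<bar>x i\<bar> powr p)"
        using l by (intro sum.cong refl) (simp add: abs_mult powr_mult)
      then show ?thesis by (simp add: lp sum_distrib_left)
    qed
    have Fe: "f_abc a b c n (\<lambda>i\<in>{..<n}. l * x i) = f_abc a b c n (\<lambda>i. l * x i)"
      by (rule f_abc_cong) simp
    have ex: "-(\<alpha> * real n) * (q * (\<Sum>i<n. \<bar>x i\<bar> powr p)) = -(\<alpha> * (real n - 1)) * (\<Sum>i<n. \<bar>x i\<bar> powr p)"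
      using n by (simp add: q_def field_simps)
    have "M * (exp (-(\<alpha> * (real n - 1)) * (\<Sum>i<n. \<bar>x i\<bar> powr p)) * f_abc a b c n x)
        = exp (-(\<alpha> * (real n - 1)) * (\<Sum>i<n. \<bar>x i\<bar> powr p)) * (M * f_abc a b c n x)" by (simp add: mult_ac)
    also have "\<dots> \<le> exp (-(\<alpha> * (real n - 1)) * (\<Sum>i<n. \<bar>x i\<bar> powr p)) * f_abc a b c n (\<lambda>i. l * x i)"
      unfolding M_def using f_abc_scale[OF l b, of a n c x] by (intro mult_left_mono) (auto simp: mult.assoc)
    finally have R: "M * (exp (-(\<alpha> * (real n - 1)) * (\<Sum>i<n. \<bar>x i\<bar> powr p)) * f_abc a b c n x)
       \<le> exp (-(\<alpha> * (real n - 1)) * (\<Sum>i<n. \<bar>x i\<bar> powr p)) * f_abc a b c n (\<lambda>i. l * x i)" .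
    show "ennreal M * ennreal (exp (-(\<alpha> * (real n - 1)) * (\<Sum>i<n. \<bar>x i\<bar> powr p)) * f_abc a b c n x)
        \<le> g (\<lambda>i\<in>{..<n}. l * x i)"
      unfolding g_def S Fe ex using R M
      by (simp add: ennreal_mult[symmetric] f_abc_nonneg del: ennreal_mult')
  qed
  have I2: "(\<integral>\<^sup>+x. ennreal M * ennreal (exp (-(\<alpha> * (real n - 1)) * (\<Sum>i<n. \<bar>x i\<bar> powr p)) * f_abc a b c n x) \<partial>PiM {..<n} (\<lambda>_. lborel))
      = ennreal M * NN a b c p (\<alpha> * (real n - 1)) n"
    by (simp add: NN_def nn_integral_cmult)
  have A: "ennreal (l ^ n) * (ennreal M * NN a b c p (\<alpha> * (real n - 1)) n) \<le> NN a b c p (\<alpha> * real n) n"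
    unfolding E using I1 unfolding I2 by (simp add: mult_left_mono)
  have "l ^ n * M = q powr ((real n + a*b*n*n + c*n) / p)"
  proof -
    have "l ^ n * M = l powr (real n) * (l powr (a*b*n*n) * l powr (c*n))"
      using l by (simp add: M_def powr_pow_nat powr_realpow mult.assoc)
    also have "\<dots> = l powr (real n + a*b*n*n + c*n)" by (simp add: powr_add)
    also have "\<dots> = q powr ((real n + a*b*n*n + c*n) / p)" by (simp add: l_def powr_powr)
    finally show ?thesis .
  qed
  note LM = this
  have "ennreal (l ^ n) * (ennreal M * NN a b c p (\<alpha> * (real n - 1)) n)
     = ennreal (l ^ n * M) * NN a b c p (\<alpha> * (real n - 1)) n"
    using l M by (simp add: ennreal_mult mult.assoc)
  then have "ennreal (l ^ n) * (ennreal M * NN a b c p (\<alpha> * (real n - 1)) n)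
     = ennreal (q powr ((real n + a*b*n*n + c*n) / p)) * NN a b c p (\<alpha> * (real n - 1)) n"
    unfolding LM .
  with A show ?thesis unfolding q_def by simp
qed



lemma q_bound:
  fixes a n :: nat and b c p :: real
  assumes n: "n \<ge> 2" and b: "b > 0" and c: "c \<ge> 0" and p: "p \<ge> 1"
  shows "exp (-(2 + 2*a*b*n + 2*c)) \<le> ((real n - 1) / real n) powr ((real n + a*b*n*n + c*n) / p)"
proof -
  define q where "q = (real n - 1) / real n"
  have q: "q > 0" using n by (simp add: q_def)
  define E0 where "E0 = real n + a*b*n*n + c*n"
  have E0: "E0 = real n * (1 + a*b*n + c)" by (simp add: E0_def algebra_simps)
  have E0nn: "E0 \<ge> 0" using b c by (simp add: E0_def)
  have lnq: "ln q \<ge> -1 / (real n - 1)"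
  proof -
    have "ln (1/q) \<le> 1/q - 1" using q by (intro ln_le_minus_one) auto
    moreover have "ln (1/q) = - ln q" using q by (simp add: ln_div)
    moreover have "1/q - 1 = 1 / (real n - 1)" using n by (simp add: q_def field_simps)
    ultimately show ?thesis by simp
  qed
  have n1: "real n - 1 > 0" using n by simp
  have "E0 / (real n - 1) \<le> 2 * (1 + a*b*n + c)"
  proof -
    have "real n \<le> 2 * (real n - 1)" using n by simp
    then have "real n * (1 + a*b*n + c) \<le> 2 * (real n - 1) * (1 + a*b*n + c)"
      using b c by (intro mult_right_mono) auto
    then have X: "real n * (1 + a*b*n + c) \<le> 2 * (1 + a*b*n + c) * (real n - 1)" by (simp only: mult_ac)
    show ?thesis unfolding E0 pos_divide_le_eq[OF n1] by (rule X)
  qed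
  then have s1: "-(2 + 2*a*b*n + 2*c) \<le> -(E0 / (real n - 1))" by simp
  have ep: "E0 / p \<le> E0" using E0nn p by (simp add: divide_le_eq mult_le_cancel_left1)
  have "-(E0 / (real n - 1)) = E0 * (-1 / (real n - 1))" by simp
  also have "\<dots> \<le> E0 / p * (-1 / (real n - 1))"
    using ep n1 by (intro mult_right_mono_neg) auto
  also have "\<dots> \<le> E0 / p * ln q"
    using lnq E0nn p by (intro mult_left_mono) auto
  finally have "-(2 + 2*a*b*n + 2*c) \<le> E0 / p * ln q" using s1 by linarith
  then have "exp (-(2 + 2*a*b*n + 2*c)) \<le> exp (E0 / p * ln q)" by simp
  also have "exp (E0 / p * ln q) = q powr (E0 / p)" using q by (simp add: powr_def)
  finally show ?thesis unfolding q_def E0_def .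
qed

lemma gamma_p_pos: "p \<ge> 1 \<Longrightarrow> gamma_p p > 0"
  unfolding gamma_p_def by (intro divide_pos_pos mult_pos_pos Gamma_real_pos) auto

lemma Z_eq: "Z a b c m p = enn2real (NN a b c p (real a * b * gamma_p p * real m) m)"
proof -
  have "Z a b c m p = enn2real (\<integral>\<^sup>+x. ennreal (exp (- real a * b * real m * gamma_p p * (\<Sum>i<m. \<bar>x i\<bar> powr p)) * f_abc a b c m x) \<partial>PiM {..<m} (\<lambda>_. lborel))"
    unfolding Z_def by (rule integral_eq_nn_integral) (measurable, simp add: f_abc_nonneg)
  also have "(\<integral>\<^sup>+x. ennreal (exp (- real a * b * real m * gamma_p p * (\<Sum>i<m. \<bar>x i\<bar> powr p)) * f_abc a b c m x) \<partial>PiM {..<m} (\<lambda>_. lborel))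
     = NN a b c p (real a * b * gamma_p p * real m) m"
    unfolding NN_def by (intro nn_integral_cong) (simp add: mult_ac)
  finally show ?thesis .
qed

theorem mainTheorem7:
  fixes a :: nat and b c p :: real
  assumes "a \<ge> 1" and "b > 0" and "c \<ge> 0" and "p \<ge> 1"
  shows "\<exists>c3 > 0. \<forall>n::nat. n \<ge> 2 \<longrightarrow>
           Z a b c n p / Z a b c (n - 1) p \<ge> exp (- c3 * real n)"
proof -
  note a = assms(1) and b = assms(2) and c = assms(3) and p = assms(4)
  define \<alpha> where "\<alpha> = real a * b * gamma_p p"
  have \<alpha>: "\<alpha> > 0" using a b gamma_p_pos[OF p] by (simp add: \<alpha>_def)
  define C where "C = 1 + c + 2*a*b + \<alpha> * 2 powr p + 10*b"
  have C: "C > 0" using \<alpha> b c by (simp add: C_def add_pos_nonneg)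
  show ?thesis
  proof (intro exI[of _ C] conjI allI impI C)
    fix n :: nat assume n: "n \<ge> 2"
    define m where "m = n - 1"
    have nm: "n = Suc m" and m1: "m \<ge> 1" using n by (auto simp: m_def)
    have rm: "real m = real n - 1" using n by (simp add: m_def of_nat_diff)
    define L1 where "L1 = ((real n - 1) / real n) powr ((real n + a*b*n*n + c*n) / p)"
    define K where "K = exp (-(\<alpha> * real m) * 2 powr p) * exp (-10*b*m)"
    have L1: "L1 \<ge> exp (-(2 + 2*a*b*n + 2*c))" unfolding L1_def using q_bound[OF n b c p] .
    have K: "K > 0" by (simp add: K_def)
    have L1p: "L1 \<ge> 0" by (simp add: L1_def)
    define N1 where "N1 = NN a b c p (\<alpha> * real n) n"
    define N0 where "N0 = NN a b c p (\<alpha> * real m) m"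
    have Zn: "Z a b c n p = enn2real N1" by (simp add: Z_eq N1_def \<alpha>_def)
    have Zm: "Z a b c (n - 1) p = enn2real N0" by (simp add: Z_eq N0_def \<alpha>_def m_def)
    have step1: "ennreal L1 * NN a b c p (\<alpha> * real m) n \<le> N1"
      unfolding L1_def N1_def rm using NN_scale[OF n a b c \<alpha> p] .
    have step2: "ennreal K * N0 \<le> NN a b c p (\<alpha> * real m) n"
      unfolding K_def N0_def nm using NN_step[OF a b c _ _, of "\<alpha> * real m" p m] \<alpha> p by simp
    have comb: "ennreal (L1 * K) * N0 \<le> N1"
    proof -
      have "ennreal (L1 * K) * N0 = ennreal L1 * (ennreal K * N0)"
        using L1p K by (simp add: ennreal_mult mult.assoc)
      also have "\<dots> \<le> ennreal L1 * NN a b c p (\<alpha> * real m) n" by (intro mult_left_mono step2) auto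
      also have "\<dots> \<le> N1" by (rule step1)
      finally show ?thesis .
    qed
    have am: "\<alpha> * real m > 0" using \<alpha> m1 by simp
    have an: "\<alpha> * real n > 0" using \<alpha> n by simp
    have N1fin: "N1 < \<infinity>" unfolding N1_def using NN_finite[OF a b c an p] .
    have N0fin: "N0 < \<infinity>" unfolding N0_def using NN_finite[OF a b c am p] .
    have N0pos: "N0 > 0" unfolding N0_def using NN_pos[OF a b c _, of "\<alpha> * real m" p m] am p by simp
    have Z0pos: "enn2real N0 > 0" using N0fin N0pos by (simp add: enn2real_positive_iff)
    have "L1 * K * enn2real N0 \<le> enn2real N1"
    proof -
      have "enn2real (ennreal (L1 * K) * N0) \<le> enn2real N1" by (rule enn2real_mono[OF comb]) (use N1fin in simp)
      then show ?thesis using L1p K by (simp add: enn2real_mult)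
    qed
    then have ratio: "L1 * K \<le> enn2real N1 / enn2real N0" using Z0pos by (simp add: pos_le_divide_eq)
    have "exp (- C * real n) \<le> exp (-(2 + 2*a*b*n + 2*c)) * K"
    proof -
      have "real m \<le> real n" using rm by simp
      then have "\<alpha> * real m * 2 powr p \<le> \<alpha> * real n * 2 powr p" "10 * b * real m \<le> 10 * b * real n"
        using \<alpha> b by (auto intro!: mult_right_mono mult_left_mono)
      moreover have "2 + 2*c \<le> (1 + c) * real n"
      proof -
        have "(1+c)*2 \<le> (1+c)*real n" using n c by (intro mult_left_mono) auto
        then show ?thesis by simp
      qed
      ultimately have "2 + 2*a*b*n + 2*c + \<alpha> * real m * 2 powr p + 10*b*m \<le> C * real n"
        unfolding C_def by (simp add: algebra_simps)
      then have ineq: "exp (- C * real n) \<le> exp (-(2 + 2*a*b*n + 2*c) + (-(\<alpha> * real m) * 2 powr p) + (-10*b*m))"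
        by simp
      have e: "exp (-(2 + 2*a*b*n + 2*c) + (-(\<alpha> * real m) * 2 powr p) + (-10*b*m)) = exp (-(2 + 2*a*b*n + 2*c)) * K"
        unfolding K_def by (simp only: exp_add mult.assoc)
      show ?thesis unfolding e[symmetric] by (rule ineq)
    qed
    also have "\<dots> \<le> L1 * K" using L1 K by (intro mult_right_mono) auto
    also have "\<dots> \<le> Z a b c n p / Z a b c (n - 1) p" unfolding Zn Zm by (rule ratio)
    finally show "exp (- C * real n) \<le> Z a b c n p / Z a b c (n - 1) p" .
  qed
qed

end
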